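(* Let $D=\{(x,t)\in[-2,2]^2: x^2-2\le t\}$, let $p\colon D\to[-2,2]$, $p(x,t)=t$, and let $\phi\colon D\to D$, $\phi(x,t)=(x^2-2,\;x^2(t-2)+2)$. Suppose $E\subset D$ is a Borel set such that (i) $\phi(E)\subset E$ modulo Lebesgue-null sets (i.e. $\phi(E)\setminus E$ has two-dimensional Lebesgue measure zero), and (ii) for almost every $t\in p(E)$, the fiber $p^{-1}(t)=\{(x,t): x^2\le t+2\}$ is, up to a set of one-dimensional Lebesgue measure zero in the fiber, either contained in $E$ or contained in $D\setminus E$. Then $E$ is either Lebesgue-null or Lebesgue-conull in $D$.
   Context: Measures on $D$ are two-dimensional Lebesgue measure; measures on fibers $p^{-1}(t)$ (horizontal segments) are one-dimensional Lebesgue measure; "almost every $t$" refers to one-dimensional Lebesgue measure. *)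

theory Defs
  imports "HOL-Analysis.Analysis"
begin

definition Dom :: "(real \<times> real) set" where
  "Dom = {(x, t). -2 \<le> x \<and> x \<le> 2 \<and> -2 \<le> t \<and> t \<le> 2 \<and> x^2 - 2 \<le> t}"

definition proj_p :: "real \<times> real \<Rightarrow> real" where
  "proj_p z = snd z"

definition phi :: "real \<times> real \<Rightarrow> real \<times> real" where
  "phi z = (fst z ^ 2 - 2, (fst z)^2 * (snd z - 2) + 2)"

text \<open>The fiber over t, identified with its x-coordinates (a subset of the line),
  so that one-dimensional Lebesgue measure applies.\<close>
definition fiber :: "real \<Rightarrow> real set" where
  "fiber t = {x. (x, t) \<in> Dom}"

end

theory Submission
  imports Defs
begin


definition hsec :: "(real \<times> real) set \<Rightarrow> real \<Rightarrow> real set" where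
  "hsec X t = {x. (x, t) \<in> X}"

lemma hsec_borel: "X \<in> sets borel \<Longrightarrow> hsec X t \<in> sets borel"
proof -
  assume X: "X \<in> sets borel"
  have "(\<lambda>x::real. (x, t)) \<in> borel_measurable borel" by simp
  then have "(\<lambda>x::real. (x, t)) -` X \<inter> space borel \<in> sets borel"
    using X by (rule measurable_sets)
  then show ?thesis by (simp add: hsec_def vimage_def)
qed

lemma hsec_meas: "X \<in> sets borel \<Longrightarrow> (\<lambda>t. emeasure lborel (hsec X t)) \<in> borel_measurable lborel"
proof -
  assume X: "X \<in> sets borel"
  have e: "sets (lborel \<Otimes>\<^sub>M lborel) = sets (lborel::(real\<times>real) measure)" by (simp only: lborel_prod)
  from X have "X \<in> sets (lborel \<Otimes>\<^sub>M lborel)" by (simp only: e sets_lborel)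
  from lborel_pair.measurable_emeasure_Pair2[OF this]
  show ?thesis by (simp add: hsec_def vimage_def)
qed

lemma hsec_emeasure: "X \<in> sets borel \<Longrightarrow> emeasure lborel X = (\<integral>\<^sup>+t. emeasure lborel (hsec X t) \<partial>lborel)"
proof -
  assume X: "X \<in> sets borel"
  have e: "sets (lborel \<Otimes>\<^sub>M lborel) = sets (lborel::(real\<times>real) measure)" by (simp only: lborel_prod)
  from X have "X \<in> sets (lborel \<Otimes>\<^sub>M lborel)" by (simp only: e sets_lborel)
  from lborel_pair.emeasure_pair_measure_alt2[OF this]
  show ?thesis by (simp add: hsec_def vimage_def lborel_prod)
qed

lemma null_borel: "X \<in> sets borel \<Longrightarrow> X \<in> null_sets lebesgue \<longleftrightarrow> emeasure lborel X = 0"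
  by (simp add: null_sets_completion_iff null_sets_def)

lemma tonelli_null:
  assumes X: "X \<in> sets borel"
  shows "X \<in> null_sets lebesgue \<longleftrightarrow> (AE t in lborel. hsec X t \<in> null_sets lebesgue)"
proof -
  have "X \<in> null_sets lebesgue \<longleftrightarrow> (\<integral>\<^sup>+t. emeasure lborel (hsec X t) \<partial>lborel) = 0"
    using null_borel[OF X] hsec_emeasure[OF X] by simp
  also have "\<dots> \<longleftrightarrow> (AE t in lborel. emeasure lborel (hsec X t) = 0)"
    by (rule nn_integral_0_iff_AE[OF hsec_meas[OF X]])
  also have "\<dots> \<longleftrightarrow> (AE t in lborel. hsec X t \<in> null_sets lebesgue)"
    using null_borel[OF hsec_borel[OF X]] by simp
  finally show ?thesis .
qed



lemma Dom_borel: "Dom \<in> sets borel"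
proof -
  have "Dom = {z::real\<times>real. -2 \<le> fst z \<and> fst z \<le> 2 \<and> -2 \<le> snd z \<and> snd z \<le> 2 \<and> fst z ^ 2 - 2 \<le> snd z}"
    by (auto simp: Dom_def)
  also have "\<dots> \<in> sets borel"
    by (intro borel_closed closed_Collect_conj closed_Collect_le continuous_intros)
  finally show ?thesis .
qed

definition psip :: "real \<times> real \<Rightarrow> real \<times> real" where
  "psip w = (sqrt (fst w + 2), (snd w - 2) / (fst w + 2) + 2)"
definition psim :: "real \<times> real \<Rightarrow> real \<times> real" where
  "psim w = (- sqrt (fst w + 2), (snd w - 2) / (fst w + 2) + 2)"

lemma psip_diff: "psip differentiable_on {w. fst w > -2}"
  unfolding psip_def differentiable_on_def
proof (intro ballI)
  fix w :: "real\<times>real" assume "w \<in> {w. -2 < fst w}"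
  then obtain a b where w: "w = (a,b)" and "-2 < a" by (cases w) auto
  have 1: "(\<lambda>w::real\<times>real. sqrt (fst w + 2)) differentiable at (a,b)"
    unfolding differentiable_def using \<open>-2 < a\<close>
    by (auto intro!: derivative_eq_intros exI)
  have 2: "(\<lambda>w::real\<times>real. (snd w - 2) / (fst w + 2) + 2) differentiable at (a,b)"
    unfolding differentiable_def using \<open>-2 < a\<close>
    by (auto intro!: derivative_eq_intros exI)
  show "(\<lambda>w. (sqrt (fst w + 2), (snd w - 2) / (fst w + 2) + 2)) differentiable at w within {w. - 2 < fst w}"
    unfolding w by (rule differentiable_at_withinI[OF differentiable_Pair[OF 1 2]])
qed

lemma psim_diff: "psim differentiable_on {w. fst w > -2}"
  unfolding psim_def differentiable_on_def
proof (intro ballI)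
  fix w :: "real\<times>real" assume "w \<in> {w. -2 < fst w}"
  then obtain a b where w: "w = (a,b)" and "-2 < a" by (cases w) auto
  have 1: "(\<lambda>w::real\<times>real. - sqrt (fst w + 2)) differentiable at (a,b)"
    unfolding differentiable_def using \<open>-2 < a\<close>
    by (auto intro!: derivative_eq_intros exI)
  have 2: "(\<lambda>w::real\<times>real. (snd w - 2) / (fst w + 2) + 2) differentiable at (a,b)"
    unfolding differentiable_def using \<open>-2 < a\<close>
    by (auto intro!: derivative_eq_intros exI)
  show "(\<lambda>w. (- sqrt (fst w + 2), (snd w - 2) / (fst w + 2) + 2)) differentiable at w within {w. - 2 < fst w}"
    unfolding w by (rule differentiable_at_withinI[OF differentiable_Pair[OF 1 2]])
qed

lemma phi_null:
  assumes "negligible (phi ` S)"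
  shows "negligible S"
proof -
  let ?U = "{w::real\<times>real. fst w > -2}"
  have n1: "negligible (psip ` (phi ` S \<inter> ?U))"
    by (rule negligible_differentiable_image_negligible)
       (auto intro: negligible_subset[OF assms] differentiable_on_subset[OF psip_diff])
  have n2: "negligible (psim ` (phi ` S \<inter> ?U))"
    by (rule negligible_differentiable_image_negligible)
       (auto intro: negligible_subset[OF assms] differentiable_on_subset[OF psim_diff])
  have n3: "negligible {z::real\<times>real. (1,0) \<bullet> z = 0}"
    by (rule negligible_hyperplane) (simp add: zero_prod_def)
  have "S \<subseteq> psip ` (phi ` S \<inter> ?U) \<union> psim ` (phi ` S \<inter> ?U) \<union> {z::real\<times>real. (1,0) \<bullet> z = 0}"
  proof
    fix z assume z: "z \<in> S"
    obtain x t where zxt: "z = (x,t)" by (cases z)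
    show "z \<in> psip ` (phi ` S \<inter> ?U) \<union> psim ` (phi ` S \<inter> ?U) \<union> {z::real\<times>real. (1,0) \<bullet> z = 0}"
    proof (cases "x = 0")
      case True then show ?thesis by (simp add: zxt inner_prod_def)
    next
      case False
      then have x2: "x^2 > 0" by simp
      have inU: "phi z \<in> phi ` S \<inter> ?U" using z x2 by (auto simp: phi_def zxt intro!: image_eqI[where x=z])
      have snd_eq: "(x\<^sup>2 * (t - 2) + 2 - 2) / (x\<^sup>2 - 2 + 2) + 2 = t" using x2 by simp
      show ?thesis
      proof (cases "x > 0")
        case True
        have "psip (phi z) = z" using True snd_eq by (simp add: psip_def phi_def zxt)
        then show ?thesis using inU by (metis UnI1 image_eqI)
      next
        case False
        with \<open>x \<noteq> 0\<close> have "x < 0" by simp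
        have "psim (phi z) = z" using \<open>x < 0\<close> snd_eq by (simp add: psim_def phi_def zxt)
        then show ?thesis using inU by (metis UnI1 UnI2 image_eqI)
      qed
    qed
  qed
  then show ?thesis using n1 n2 n3 by (meson negligible_Un negligible_subset)
qed

lemma fiber_null:
  fixes P :: "real set"
  assumes t: "-2 < t" "t < 2"
    and N: "negligible {x \<in> fiber t. x^2 * (t - 2) + 2 \<in> P}"
  shows "negligible (P \<inter> {t^2 - 2 <..< 2})"
proof -
  let ?h = "\<lambda>x::real. x^2 * (t - 2) + 2"
  have "negligible (?h ` {x \<in> fiber t. ?h x \<in> P})"
    by (rule negligible_differentiable_image_negligible[OF _ N])
       (simp_all only: power2_eq_square order_refl, intro derivative_intros)
  moreover have "P \<inter> {t^2 - 2 <..< 2} \<subseteq> ?h ` {x \<in> fiber t. ?h x \<in> P}"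
  proof
    fix y assume y: "y \<in> P \<inter> {t^2 - 2 <..< 2}"
    define q where "q = (y - 2) / (t - 2)"
    have q0: "q > 0" using y t by (auto simp: q_def divide_neg_neg)
    have "(t^2 - 4) / (t - 2) = t + 2" using t by (simp add: field_simps power2_eq_square)
    moreover have "(y - 2) / (t - 2) < (t^2 - 4) / (t - 2)"
      using y t by (intro divide_strict_right_mono_neg) auto
    ultimately have q1: "q < t + 2" by (simp add: q_def)
    define x where "x = sqrt q"
    have x2: "x^2 = q" using q0 by (simp add: x_def)
    have hx: "?h x = y" using t q0 by (simp add: x2 q_def)
    have "x \<ge> 0" using q0 by (simp add: x_def)
    moreover have "x \<le> 2"
    proof -
      have "x \<le> sqrt (2^2)" unfolding x_def by (rule real_sqrt_le_mono) (use q1 t in simp)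
      then show ?thesis by simp
    qed
    ultimately have "x \<in> fiber t" using x2 q1 t by (simp add: fiber_def Dom_def)
    then show "y \<in> ?h ` {x \<in> fiber t. ?h x \<in> P}" using hx y by (intro image_eqI[where x=x]) auto
  qed
  ultimately show ?thesis by (rule negligible_subset)
qed


theorem lemma3p3:
  fixes E :: "(real \<times> real) set"
  assumes "E \<in> sets borel"
    and "E \<subseteq> Dom"
    and "phi ` E - E \<in> null_sets lebesgue"
    and "AE t in lebesgue. t \<in> proj_p ` E \<longrightarrow>
           ({x \<in> fiber t. (x, t) \<notin> E} \<in> null_sets lebesgue \<or>
            {x \<in> fiber t. (x, t) \<in> E} \<in> null_sets lebesgue)"
  shows "E \<in> null_sets lebesgue \<or> Dom - E \<in> null_sets lebesgue"
proof -
  note Eb = assms(1)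
  have DEb: "Dom - E \<in> sets borel" using Eb Dom_borel by auto
  define P where "P = {t. hsec E t \<in> null_sets lebesgue}"
  define Q where "Q = {t. hsec (Dom - E) t \<in> null_sets lebesgue}"
  have Pb: "P \<in> sets borel"
  proof -
    have "P = (\<lambda>t. emeasure lborel (hsec E t)) -` {0} \<inter> space lborel"
      using null_borel[OF hsec_borel[OF Eb]] by (auto simp: P_def)
    also have "\<dots> \<in> sets lborel" by (rule measurable_sets[OF hsec_meas[OF Eb]]) simp
    finally show ?thesis by simp
  qed
  have Qb: "Q \<in> sets borel"
  proof -
    have "Q = (\<lambda>t. emeasure lborel (hsec (Dom - E) t)) -` {0} \<inter> space lborel"
      using null_borel[OF hsec_borel[OF DEb]] by (auto simp: Q_def)
    also have "\<dots> \<in> sets lborel" by (rule measurable_sets[OF hsec_meas[OF DEb]]) simp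
    finally show ?thesis by simp
  qed
  have secE: "hsec E t = {x \<in> fiber t. (x, t) \<in> E}" for t
    using assms(2) by (auto simp: hsec_def fiber_def)
  have secDE: "hsec (Dom - E) t = {x \<in> fiber t. (x, t) \<notin> E}" for t
    by (auto simp: hsec_def fiber_def)
  have out: "t \<in> P \<and> t \<in> Q" if "\<not> (-2 \<le> t \<and> t \<le> 2)" for t
  proof -
    have "hsec E t = {}" "hsec (Dom - E) t = {}"
      using that assms(2) by (auto simp: hsec_def Dom_def)
    then show ?thesis by (simp add: P_def Q_def)
  qed
  have s3: "AE t in lborel. t \<in> P \<or> t \<in> Q"
  proof -
    have "AE t in lborel. t \<in> proj_p ` E \<longrightarrow>
           ({x \<in> fiber t. (x, t) \<notin> E} \<in> null_sets lebesgue \<or>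
            {x \<in> fiber t. (x, t) \<in> E} \<in> null_sets lebesgue)"
      using assms(4) by (simp only: AE_completion_iff)
    then show ?thesis
    proof (rule AE_mp[OF _ AE_I2], intro impI)
      fix t assume h: "t \<in> proj_p ` E \<longrightarrow>
           ({x \<in> fiber t. (x, t) \<notin> E} \<in> null_sets lebesgue \<or>
            {x \<in> fiber t. (x, t) \<in> E} \<in> null_sets lebesgue)"
      show "t \<in> P \<or> t \<in> Q"
      proof (cases "t \<in> proj_p ` E")
        case True
        then show ?thesis using h by (auto simp: P_def Q_def secE secDE)
      next
        case False
        then have "hsec E t = {}" by (force simp: hsec_def proj_p_def)
        then show ?thesis by (simp add: P_def)
      qed
    qed
  qed
  have mphi: "(\<lambda>z. snd (phi z)) \<in> borel_measurable (borel :: (real \<times> real) measure)"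
    unfolding phi_def by (intro borel_measurable_continuous_onI continuous_intros)
  have msnd: "snd \<in> borel_measurable (borel :: (real \<times> real) measure)"
    by (intro borel_measurable_continuous_onI continuous_intros)
  define S0 where "S0 = {z \<in> E. snd (phi z) \<in> P}"
  define EP where "EP = E \<inter> {z. snd z \<in> P}"
  have EPb: "EP \<in> sets borel"
  proof -
    have "EP = E \<inter> (snd -` P \<inter> space borel)" by (auto simp: EP_def)
    also have "\<dots> \<in> sets borel" using Eb measurable_sets[OF msnd Pb] by (rule sets.Int)
    finally show ?thesis .
  qed
  have EPn: "EP \<in> null_sets lebesgue"
    unfolding tonelli_null[OF EPb]
  proof (rule AE_I2)
    fix t
    have "hsec EP t = (if t \<in> P then hsec E t else {})" by (auto simp: hsec_def EP_def)
    then show "hsec EP t \<in> null_sets lebesgue" by (simp add: P_def)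
  qed
  have "phi ` S0 \<subseteq> (phi ` E - E) \<union> EP" by (auto simp: S0_def EP_def)
  then have "negligible (phi ` S0)"
    using assms(3) EPn by (meson negligible_Un negligible_iff_null_sets negligible_subset)
  then have S0n: "negligible S0" by (rule phi_null)
  define DQ where "DQ = (Dom - E) \<inter> {z. snd z \<in> Q}"
  have DQb: "DQ \<in> sets borel"
  proof -
    have "DQ = (Dom - E) \<inter> (snd -` Q \<inter> space borel)" by (auto simp: DQ_def)
    also have "\<dots> \<in> sets borel" using DEb measurable_sets[OF msnd Qb] by (rule sets.Int)
    finally show ?thesis .
  qed
  have DQn: "DQ \<in> null_sets lebesgue"
    unfolding tonelli_null[OF DQb]
  proof (rule AE_I2)
    fix t
    have "hsec DQ t = (if t \<in> Q then hsec (Dom - E) t else {})" by (auto simp: hsec_def DQ_def)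
    then show "hsec DQ t \<in> null_sets lebesgue" by (simp add: Q_def)
  qed
  define T where "T = {z \<in> Dom. snd z \<in> Q \<and> snd (phi z) \<in> P}"
  have Tb: "T \<in> sets borel"
  proof -
    have "T = Dom \<inter> (snd -` Q \<inter> space borel) \<inter> ((\<lambda>z. snd (phi z)) -` P \<inter> space borel)"
      by (auto simp: T_def)
    also have "\<dots> \<in> sets borel" using Dom_borel measurable_sets[OF msnd Qb] measurable_sets[OF mphi Pb]
      by (metis sets.Int)
    finally show ?thesis .
  qed
  have "T \<subseteq> S0 \<union> DQ" by (auto simp: T_def S0_def DQ_def)
  then have "negligible T" using S0n DQn
    by (meson negligible_Un negligible_iff_null_sets negligible_subset)
  then have "AE t in lborel. hsec T t \<in> null_sets lebesgue"
    using tonelli_null[OF Tb] by (simp add: negligible_iff_null_sets)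
  then have s10: "AE t in lborel. t \<in> Q \<and> -2 < t \<and> t < 2 \<longrightarrow> negligible (P \<inter> {t^2 - 2 <..< 2})"
  proof (rule AE_mp[OF _ AE_I2], intro impI)
    fix t assume h: "hsec T t \<in> null_sets lebesgue" and t: "t \<in> Q \<and> -2 < t \<and> t < 2"
    have "hsec T t = {x \<in> fiber t. x^2 * (t - 2) + 2 \<in> P}"
      using t by (auto simp: hsec_def T_def fiber_def phi_def)
    then show "negligible (P \<inter> {t^2 - 2 <..< 2})"
      using h t by (intro fiber_null) (auto simp: negligible_iff_null_sets)
  qed
  define G where "G = {t. t \<in> Q \<and> -2 < t \<and> t < 2 \<and> negligible (P \<inter> {t^2 - 2 <..< 2})}"
  have s10': "AE t in lborel. t \<in> Q \<and> -2 < t \<and> t < 2 \<longrightarrow> t \<in> G"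
    using s10 by (auto simp: G_def elim!: AE_mp intro!: AE_I2)
  have s11: "AE s in lborel. s \<in> {t^2 - 2 <..< 2} \<longrightarrow> s \<in> G" if tG: "t \<in> G" for t
  proof -
    have "AE s in lebesgue. s \<notin> P \<inter> {t^2 - 2 <..< 2}"
      using tG by (intro AE_not_in) (simp add: G_def negligible_iff_null_sets)
    then have A1: "AE s in lborel. s \<notin> P \<inter> {t^2 - 2 <..< 2}" by (simp only: AE_completion_iff)
    have pw: "s \<in> {t^2 - 2 <..< 2} \<longrightarrow> s \<in> G"
      if "s \<notin> P \<inter> {t^2 - 2 <..< 2}" "s \<in> P \<or> s \<in> Q"
         "s \<in> Q \<and> -2 < s \<and> s < 2 \<longrightarrow> s \<in> G" for s
    proof
      assume si: "s \<in> {t^2 - 2 <..< 2}"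
      have t2: "t^2 \<ge> 0" by simp
      from si have "t^2 - 2 < s" "s < 2" by auto
      then have "-2 < s" using t2 by linarith
      then show "s \<in> G" using that si \<open>s < 2\<close> by auto
    qed
    show ?thesis using A1 s3 s10' by eventually_elim (metis pw)
  qed
  have s12: "AE s in lborel. s \<noteq> -2 \<and> s \<noteq> (2::real)"
    using AE_lborel_singleton[of "-2::real"] AE_lborel_singleton[of "2::real"] by eventually_elim auto
  show ?thesis
  proof (cases "G = {}")
    case True
    have "AE t in lborel. t \<in> P"
      using s3 s10' s12
    proof eventually_elim
      case (elim t)
      then show ?case using out[of t] True by auto
    qed
    then have "E \<in> null_sets lebesgue"
      unfolding tonelli_null[OF Eb] by (simp add: P_def)
    then show ?thesis ..
  next
    case False
    define c where "c = Inf ((\<lambda>t. t^2) ` G)"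
    have bdd: "bdd_below ((\<lambda>t::real. t^2) ` G)" by (rule bdd_belowI[of _ 0]) auto
    have ne: "(\<lambda>t::real. t^2) ` G \<noteq> {}" using False by simp
    have c_low: "c \<le> s^2" if "s \<in> G" for s
      unfolding c_def using bdd that by (intro cInf_lower) auto
    have c_less: "\<exists>t\<in>G. t^2 < y" if "c < y" for y
      using that unfolding c_def cInf_less_iff[OF ne bdd] by auto
    have c0: "c \<ge> 0" unfolding c_def using ne by (intro cInf_greatest) auto
    have "c = 0"
    proof (rule ccontr)
      assume "c \<noteq> 0"
      with c0 have cpos: "c > 0" by simp
      obtain t0 where t0G: "t0 \<in> G" using False by auto
      then have "4 - t0^2 > 0"
      proof -
        have "4 - t0^2 = (2 - t0) * (2 + t0)" by (simp add: algebra_simps power2_eq_square)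
        also have "\<dots> > 0" using t0G by (intro mult_pos_pos) (auto simp: G_def)
        finally show ?thesis .
      qed
      with c_low[OF t0G] have c4: "c < 4" by simp
      define r where "r = sqrt c"
      have r0: "r > 0" using cpos by (simp add: r_def)
      have r2: "r^2 = c" using c0 by (simp add: r_def)
      have r2': "r < 2"
      proof -
        have "r < sqrt (2^2)" unfolding r_def by (rule real_sqrt_less_mono) (use c4 in simp)
        then show ?thesis by simp
      qed
      have pos: "r + 2 - c > 0"
      proof -
        have "r + 2 - c = (2 - r) * (1 + r)" using r2 by (simp add: algebra_simps power2_eq_square)
        also have "\<dots> > 0" using r0 r2' by (intro mult_pos_pos) auto
        finally show ?thesis .
      qed
      define eps where "eps = (r + 2 - c) / 2"
      obtain t where tG: "t \<in> G" and tl: "t^2 < c + eps"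
        using c_less[of "c + eps"] pos by (auto simp: eps_def)
      define a where "a = max (t^2 - 2) (-r)"
      have "t^2 - 2 < r" using tl pos unfolding eps_def by (simp add: field_simps)
      then have ab: "a < r" using r0 by (auto simp: a_def)
      have sub: "{a<..<r} \<subseteq> {t^2 - 2 <..< 2}" using r2' by (auto simp: a_def)
      have noG: "s \<notin> G" if "s \<in> {a<..<r}" for s
      proof
        assume "s \<in> G"
        have "r^2 - s^2 = (r - s) * (r + s)" by (simp add: algebra_simps power2_eq_square)
        also have "\<dots> > 0" using that by (intro mult_pos_pos) (auto simp: a_def)
        finally have "s^2 < c" using r2 by simp
        with c_low[OF \<open>s \<in> G\<close>] show False by simp
      qed
      have "AE s in lborel. s \<notin> {a<..<r}"
        using s11[OF tG] by eventually_elim (use sub noG in blast)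
      moreover have "{x \<in> space lborel. \<not> (x \<notin> {a<..<r})} = {a<..<r::real}" by auto
      ultimately have "emeasure lborel {a<..<r} = 0"
        using AE_iff_measurable[of "{a<..<r}" lborel "\<lambda>s. s \<notin> {a<..<r}"] by simp
      then show False using ab by simp
    qed
    have "\<forall>n. \<exists>t\<in>G. t^2 < inverse (real (Suc n))"
      using c_less \<open>c = 0\<close> by simp
    then obtain f where f: "\<And>n. f n \<in> G \<and> (f n)^2 < inverse (real (Suc n))" by metis
    have "AE s in lborel. \<forall>n. s \<in> {(f n)^2 - 2 <..< 2} \<longrightarrow> s \<in> G"
      unfolding AE_all_countable using f s11 by blast
    then have "AE s in lborel. s \<in> Q" using s12
    proof eventually_elim
      case (elim s)
      show ?case
      proof (cases "-2 < s \<and> s < 2")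
        case True
        then obtain n where n: "inverse (real (Suc n)) < s + 2"
          using reals_Archimedean[of "s + 2"] by auto
        then have "s \<in> {(f n)^2 - 2 <..< 2}" using f[of n] True by auto
        then have "s \<in> G" using elim by blast
        then show ?thesis by (simp add: G_def)
      next
        case False
        then show ?thesis using out[of s] elim by auto
      qed
    qed
    then have "Dom - E \<in> null_sets lebesgue"
      unfolding tonelli_null[OF DEb] by (simp add: Q_def)
    then show ?thesis ..
  qed
qed

end
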